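(* Let $k\ge1$, $m\ge1$, and let $y^0,\bar y^0,\dots,y^{2k},\bar y^{2k}\in\{0,1\}^m$ be $4k+2$ pairwise distinct vectors satisfying $$y^i+\bar y^i=y^0+\bar y^0\quad\text{for all } i\in\{0,\dots,2k\}.$$ With $J$, $j_0$, $U_i$, $\bar U_i$ as defined in the context, there exists $t\in\{2,3,\dots,2k\}$ such that the set $U_0\triangle U_1\triangle U_t$ is different from every $U_p$ and from every $\bar U_p$, for $0\le p\le 2k$.
   Context: **Index sets.** - $I=\{i\in[m]: y^0_i=\bar y^0_i\}$ and $J=[m]\setminus I=\{j: y^0_j+\bar y^0_j=1\}$. The set $J$ is nonempty. - Fix any $j_0\in J$. - For $i\in\{0,\dots,2k\}$, let $U_i=\{j\in J: y^i_j=1\}$ if $y^i_{j_0}=1$, and $U_i=\{j\in J:\bar y^i_j=1\}$ otherwise. - Let $\bar U_i=J\setminus U_i$. Here $\triangle$ denotes symmetric difference of sets. *)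

theory Defs
  imports "HOL-Library.FuncSet"
begin

text \<open>Vectors in {0,1}^m are extensional functions {0..<m} \<rightarrow> {0,1}; the family
  y^0, ybar^0, ..., y^{2k}, ybar^{2k} is given by y i and yb i.\<close>

definition symdiff :: "'a set \<Rightarrow> 'a set \<Rightarrow> 'a set" (infixl "\<triangle>" 65) where
  "symdiff A B = (A - B) \<union> (B - A)"

definition Jset :: "nat \<Rightarrow> (nat \<Rightarrow> nat \<Rightarrow> nat) \<Rightarrow> (nat \<Rightarrow> nat \<Rightarrow> nat) \<Rightarrow> nat set" where
  "Jset m y yb = {j \<in> {0..<m}. y 0 j + yb 0 j = 1}"

definition Iset :: "nat \<Rightarrow> (nat \<Rightarrow> nat \<Rightarrow> nat) \<Rightarrow> (nat \<Rightarrow> nat \<Rightarrow> nat) \<Rightarrow> nat set" where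
  "Iset m y yb = {j \<in> {0..<m}. y 0 j = yb 0 j}"

definition Uset :: "nat \<Rightarrow> (nat \<Rightarrow> nat \<Rightarrow> nat) \<Rightarrow> (nat \<Rightarrow> nat \<Rightarrow> nat) \<Rightarrow> nat \<Rightarrow> nat \<Rightarrow> nat set" where
  "Uset m y yb j0 i =
     (if y i j0 = 1 then {j \<in> Jset m y yb. y i j = 1} else {j \<in> Jset m y yb. yb i j = 1})"

definition Ubar :: "nat \<Rightarrow> (nat \<Rightarrow> nat \<Rightarrow> nat) \<Rightarrow> (nat \<Rightarrow> nat \<Rightarrow> nat) \<Rightarrow> nat \<Rightarrow> nat \<Rightarrow> nat set" where
  "Ubar m y yb j0 i = Jset m y yb - Uset m y yb j0 i"

end

theory Submission
  imports Defs
begin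

lemma invol_even:
  assumes "finite S" "\<forall>x\<in>S. f x \<in> S \<and> f x \<noteq> x \<and> f (f x) = x"
  shows "even (card S)"
  using assms
proof (induction "card S" arbitrary: S rule: less_induct)
  case less
  show ?case
  proof (cases "S = {}")
    case True then show ?thesis by simp
  next
    case False
    then obtain x where x: "x \<in> S" by blast
    define S' where "S' = S - {x, f x}"
    have fx: "f x \<in> S" "f x \<noteq> x" "f (f x) = x" using less.prems x by auto
    have sub: "{x, f x} \<subseteq> S" using x fx by auto
    have c2: "card {x, f x} = 2" using fx(2) by simp
    have "card S \<ge> 2" using card_mono[OF less.prems(1) sub] c2 by simp
    moreover have "card S' = card S - 2"
      unfolding S'_def using card_Diff_subset[OF _ sub] less.prems(1) c2 by (simp add: finite_subset[OF sub])
    ultimately have c: "card S = card S' + 2" by simp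
    have cl: "\<forall>z\<in>S'. f z \<in> S' \<and> f z \<noteq> z \<and> f (f z) = z"
    proof
      fix z assume z: "z \<in> S'"
      then have zS: "z \<in> S" "z \<noteq> x" "z \<noteq> f x" unfolding S'_def by auto
      have fz: "f z \<in> S" "f z \<noteq> z" "f (f z) = z" using less.prems(2) zS(1) by auto
      have "f z \<noteq> x" using fz(3) zS(3) by force
      moreover have "f z \<noteq> f x" using fz(3) fx(3) zS(2) by force
      ultimately show "f z \<in> S' \<and> f z \<noteq> z \<and> f (f z) = z" using fz unfolding S'_def by blast
    qed
    have "even (card S')"
      using less.hyps[of S'] c cl less.prems(1) unfolding S'_def by auto
    then show ?thesis using c by simp
  qed
qed

lemma sd1: "A \<triangle> B \<triangle> C = A \<Longrightarrow> B = C"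
  unfolding symdiff_def by (auto simp: set_eq_iff) 
lemma sd2: "A \<triangle> B \<triangle> C = B \<Longrightarrow> A = C"
  unfolding symdiff_def by (auto simp: set_eq_iff)
lemma sd3: "A \<triangle> B \<triangle> C = C \<Longrightarrow> A = B"
  unfolding symdiff_def by (auto simp: set_eq_iff)
lemma sd4: "A \<triangle> B \<triangle> C = D \<Longrightarrow> A \<triangle> B \<triangle> D = C"
  unfolding symdiff_def by (auto simp: set_eq_iff)

theorem lemma2:
  fixes k m :: nat and y yb :: "nat \<Rightarrow> nat \<Rightarrow> nat" and j0 :: nat
  assumes "k \<ge> 1" and "m \<ge> 1"
    and "\<forall>i\<le>2*k. y i \<in> {0..<m} \<rightarrow>\<^sub>E {0,1} \<and> yb i \<in> {0..<m} \<rightarrow>\<^sub>E {0,1}"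
    and "\<forall>i\<le>2*k. \<forall>i'\<le>2*k. (i \<noteq> i' \<longrightarrow> y i \<noteq> y i' \<and> yb i \<noteq> yb i') \<and> y i \<noteq> yb i'"
    and "\<forall>i\<le>2*k. \<forall>j<m. y i j + yb i j = y 0 j + yb 0 j"
    and "j0 \<in> Jset m y yb"
  shows "\<exists>t\<in>{2..2*k}. \<forall>p\<le>2*k.
           Uset m y yb j0 0 \<triangle> Uset m y yb j0 1 \<triangle> Uset m y yb j0 t \<noteq> Uset m y yb j0 p \<and>
           Uset m y yb j0 0 \<triangle> Uset m y yb j0 1 \<triangle> Uset m y yb j0 t \<noteq> Ubar m y yb j0 p"
proof -
  let ?J = "Jset m y yb"
  define U where "U i = Uset m y yb j0 i" for i
  define W where "W i = (if y i j0 = 1 then y i else yb i)" for i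
  have j0: "j0 < m" "y 0 j0 + yb 0 j0 = 1" using assms(6) by (auto simp: Jset_def)
  have UW: "U i = {j \<in> ?J. W i j = 1}" for i
    by (simp add: U_def W_def Uset_def)
  have j0U: "j0 \<in> U i" if "i \<le> 2*k" for i
  proof -
    have "y i j0 + yb i j0 = 1" using assms(5) that j0 by (metis le0 le_trans order.refl)
    then show ?thesis using assms(6) by (auto simp: UW W_def)
  qed
  have Wbin: "W i \<in> {0..<m} \<rightarrow>\<^sub>E {0,1}" if "i \<le> 2*k" for i
    using assms(3) that by (auto simp: W_def)
  have Wout: "W i j = y 0 j" if "i \<le> 2*k" "j < m" "j \<notin> ?J" for i j
  proof -
    have s: "y i j + yb i j = y 0 j + yb 0 j" using assms(5) that by blast
    have b: "y i j \<in> {0,1}" "yb i j \<in> {0,1}" "y 0 j \<in> {0,1}" "yb 0 j \<in> {0,1}"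
      using assms(3) that by (auto simp: PiE_iff)
    have "y 0 j + yb 0 j \<noteq> 1" using that by (auto simp: Jset_def)
    then show ?thesis using s b by (auto simp: W_def)
  qed
  have Wdist: "W i \<noteq> W i'" if "i \<le> 2*k" "i' \<le> 2*k" "i \<noteq> i'" for i i'
    using assms(4)[rule_format, of i i'] assms(4)[rule_format, of i' i] that by (auto simp: W_def)
  have Uinj: "i = i'" if "i \<le> 2*k" "i' \<le> 2*k" "U i = U i'" for i i'
  proof (rule ccontr)
    assume ne: "i \<noteq> i'"
    have "W i = W i'"
    proof
      fix j
      show "W i j = W i' j"
      proof (cases "j < m")
        case False
        then show ?thesis using Wbin[OF that(1)] Wbin[OF that(2)] by (auto simp: PiE_iff extensional_def)
      next
        case True
        show ?thesis
        proof (cases "j \<in> ?J")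
          case False then show ?thesis using Wout that True by simp
        next
          case jJ: True
          have "W i j \<in> {0,1}" "W i' j \<in> {0,1}" using Wbin that True by (auto simp: PiE_iff)
          moreover have "(W i j = 1) = (W i' j = 1)"
            using that(3) jJ unfolding UW by blast
          ultimately show ?thesis by auto
        qed
      qed
    qed
    then show False using Wdist that ne by blast
  qed
  have j0Ub: "j0 \<notin> Ubar m y yb j0 p" if "p \<le> 2*k" for p
    using j0U[OF that] by (simp add: Ubar_def U_def)
  define V where "V t = U 0 \<triangle> U 1 \<triangle> U t" for t
  have j0V: "j0 \<in> V t" if "t \<le> 2*k" for t
    using j0U[OF that] j0U[of 0] j0U[of 1] assms(1) by (auto simp: V_def symdiff_def)
  show ?thesis
  proof (rule ccontr)
    assume "\<not> ?thesis"
    then obtain t0 where t0: "t0 \<in> {2..2*k}" and H0: "\<And>t. t \<in> {2..2*k} \<Longrightarrow> \<exists>p\<le>2*k.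
           U 0 \<triangle> U 1 \<triangle> U t = U p \<or> U 0 \<triangle> U 1 \<triangle> U t = Ubar m y yb j0 p"
      unfolding U_def using assms(1) by fastforce
    have H: "\<forall>t\<in>{2..2*k}. \<exists>p\<le>2*k. V t = U p"
    proof
      fix t assume t: "t \<in> {2..2*k}"
      obtain p where p: "p \<le> 2*k" "V t = U p \<or> V t = Ubar m y yb j0 p"
        using H0[OF t] unfolding V_def by blast
      have "V t \<noteq> Ubar m y yb j0 p" using j0V[of t] j0Ub[OF p(1)] t by auto
      then show "\<exists>p\<le>2*k. V t = U p" using p by blast
    qed
    define f where "f t = (SOME p. p \<le> 2*k \<and> V t = U p)" for t
    have fp: "f t \<le> 2*k \<and> V t = U (f t)" if "t \<in> {2..2*k}" for t
      using H that unfolding f_def by (metis (mono_tags, lifting) someI_ex)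
    have "\<forall>t\<in>{2..2*k}. f t \<in> {2..2*k} \<and> f t \<noteq> t \<and> f (f t) = t"
    proof
      fix t assume t: "t \<in> {2..2*k}"
      have p: "f t \<le> 2*k" "V t = U (f t)" using fp[OF t] by auto
      have n0: "f t \<noteq> 0"
      proof
        assume "f t = 0"
        then have "U 1 = U t" using p(2) sd1 unfolding V_def by metis
        then show False using Uinj[of 1 t] t assms(1) by auto
      qed
      have n1: "f t \<noteq> 1"
      proof
        assume "f t = 1"
        then have "U 0 = U t" using p(2) sd2 unfolding V_def by metis
        then show False using Uinj[of 0 t] t assms(1) by auto
      qed
      have nt: "f t \<noteq> t"
      proof
        assume "f t = t"
        then have "U 0 = U 1" using p(2) sd3 unfolding V_def by metis
        then show False using Uinj[of 0 1] assms(1) by auto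
      qed
      have ft: "f t \<in> {2..2*k}" using n0 n1 p(1) by auto
      have "V (f t) = U t" using p(2) sd4 unfolding V_def by metis
      then have "U (f (f t)) = U t" using fp[OF ft] by simp
      then have "f (f t) = t" using Uinj fp[OF ft] t by auto
      then show "f t \<in> {2..2*k} \<and> f t \<noteq> t \<and> f (f t) = t" using ft nt by blast
    qed
    then have "even (card {2..2*k})" by (intro invol_even) auto
    moreover have "card {2..2*k} = 2*k - 1" by simp
    ultimately show False using assms(1) by presburger
  qed
qed

end
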